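(* Let $a,b,c$ be positive integers. For any non-negative integers $p,m,n$, \[\zeta^\star_p(\{c\}^m,b,\{a\}^n)=\sum_{k=0}^m\sum_{l=0}^n(-1)^{k+l}\zeta_p(\{a\}^l,b,\{c\}^k)\cdot\zeta^\star_p(\{c\}^{m-k})\cdot\zeta^\star_p(\{a\}^{n-l}).\]
   Context: For an integer $p\geq 0$ and positive integers $k_1,\ldots,k_n$, $\zeta_p(k_1,\ldots,k_n)=\sum_{p\geq p_1>\cdots>p_n>0}p_1^{-k_1}\cdots p_n^{-k_n}$ and $\zeta^\star_p(k_1,\ldots,k_n)=\sum_{p\geq p_1\geq\cdots\geq p_n\geq 1}p_1^{-k_1}\cdots p_n^{-k_n}$; empty sums are $0$ and $\zeta_p(\varnothing)=\zeta^\star_p(\varnothing)=1$ for the empty index (also when $p=0$). $\{a\}^m$ denotes $m$ copies of $a$. *)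

theory Defs
  imports Complex_Main
begin

text \<open>Index lists are written k_1,...,k_n with p_1 the largest summation
variable:  zeta_p(k_1,...,k_n) = sum over p >= p_1 > ... > p_n > 0 of prod p_i^(-k_i),
zeta*_p(k_1,...,k_n) = sum over p >= p_1 >= ... >= p_n >= 1. Empty index gives 1.\<close>

fun mzeta :: "nat \<Rightarrow> nat list \<Rightarrow> real" where
  "mzeta p [] = 1"
| "mzeta p (k # ks) = (\<Sum>q=1..p. mzeta (q - 1) ks / real q ^ k)"

fun mzeta_star :: "nat \<Rightarrow> nat list \<Rightarrow> real" where
  "mzeta_star p [] = 1"
| "mzeta_star p (k # ks) = (\<Sum>q=1..p. mzeta_star q ks / real q ^ k)"

end

theory Submission
  imports Defs
begin

fun hs :: "(nat \<Rightarrow> real) \<Rightarrow> nat \<Rightarrow> nat \<Rightarrow> nat \<Rightarrow> real" where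
  "hs x lo p 0 = 1"
| "hs x lo p (Suc m) = (\<Sum>q=lo..p. x q * hs x lo q m)"

fun es :: "(nat \<Rightarrow> real) \<Rightarrow> nat \<Rightarrow> nat \<Rightarrow> nat \<Rightarrow> real" where
  "es x lo p 0 = 1"
| "es x lo p (Suc k) = (\<Sum>q=lo..p. x q * es x lo (q - 1) k)"

lemma C1: "mzeta_star p (replicate m c) = hs (\<lambda>q. 1 / real q ^ c) 1 p m"
  by (induction m arbitrary: p) auto

lemma C2: "mzeta p (replicate m c) = es (\<lambda>q. 1 / real q ^ c) 1 p m"
  by (induction m arbitrary: p) auto

lemma S1: "(\<Sum>q=1..(p::nat). \<Sum>r=1..q. g q r) = (\<Sum>r=1..p. \<Sum>q=r..p. (g q r :: real))"
proof (induction p)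
  case 0 then show ?case by simp
next
  case (Suc p)
  have "(\<Sum>r=1..Suc p. \<Sum>q=r..Suc p. g q r) = (\<Sum>r=1..p. \<Sum>q=r..Suc p. g q r) + g (Suc p) (Suc p)"
    by simp
  also have "(\<Sum>r=1..p. \<Sum>q=r..Suc p. g q r) = (\<Sum>r=1..p. (\<Sum>q=r..p. g q r) + g (Suc p) r)"
    by (rule sum.cong) auto
  finally show ?case using Suc by (simp add: sum.distrib)
qed

lemma S2: "(\<Sum>q=1..(p::nat). \<Sum>r=1..q-1. g q r) = (\<Sum>r=1..p. \<Sum>q=Suc r..p. (g q r :: real))"
proof (induction p)
  case 0 then show ?case by simp
next
  case (Suc p)
  have "(\<Sum>r=1..Suc p. \<Sum>q=Suc r..Suc p. g q r) = (\<Sum>r=1..p. \<Sum>q=Suc r..Suc p. g q r)"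
    by simp
  also have "\<dots> = (\<Sum>r=1..p. (\<Sum>q=Suc r..p. g q r) + g (Suc p) r)"
    by (rule sum.cong) auto
  finally show ?case using Suc by (simp add: sum.distrib)
qed

lemma C3: "mzeta_star p (replicate m c @ b # rest) =
   (\<Sum>r=1..p. hs (\<lambda>q. 1 / real q ^ c) r p m * (mzeta_star r rest / real r ^ b))"
proof (induction m arbitrary: p)
  case 0 then show ?case by simp
next
  case (Suc m)
  let ?w = "\<lambda>q. 1 / real q ^ c"
  let ?f = "\<lambda>r. mzeta_star r rest / real r ^ b"
  have "mzeta_star p (replicate (Suc m) c @ b # rest) =
     (\<Sum>q=1..p. \<Sum>r=1..q. ?w q * (hs ?w r q m * ?f r))"
    using Suc by (simp add: sum_distrib_left divide_inverse mult.commute)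
  also have "\<dots> = (\<Sum>r=1..p. \<Sum>q=r..p. ?w q * (hs ?w r q m * ?f r))" by (rule S1)
  also have "\<dots> = (\<Sum>r=1..p. hs ?w r p (Suc m) * ?f r)"
    by (simp add: sum_distrib_right sum_divide_distrib mult.assoc)
  finally show ?case .
qed

lemma C4: "mzeta p (replicate l a @ b # rest) =
   (\<Sum>r=1..p. es (\<lambda>q. 1 / real q ^ a) (Suc r) p l * (mzeta (r - 1) rest / real r ^ b))"
proof (induction l arbitrary: p)
  case 0 then show ?case by simp
next
  case (Suc l)
  let ?w = "\<lambda>q. 1 / real q ^ a"
  let ?f = "\<lambda>r. mzeta (r - 1) rest / real r ^ b"
  have "mzeta p (replicate (Suc l) a @ b # rest) =
     (\<Sum>q=1..p. \<Sum>r=1..q-1. ?w q * (es ?w (Suc r) (q-1) l * ?f r))"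
    using Suc by (simp add: sum_distrib_left divide_inverse mult.commute)
  also have "\<dots> = (\<Sum>r=1..p. \<Sum>q=Suc r..p. ?w q * (es ?w (Suc r) (q-1) l * ?f r))" by (rule S2)
  also have "\<dots> = (\<Sum>r=1..p. es ?w (Suc r) p (Suc l) * ?f r)"
    by (simp add: sum_distrib_right sum_divide_distrib mult.assoc)
  finally show ?case .
qed

lemma hs_empty: "p < lo \<Longrightarrow> hs x lo p (Suc m) = 0" by simp
lemma es_empty: "p < lo \<Longrightarrow> es x lo p (Suc m) = 0" by simp

lemma HU: "lo \<le> Suc p \<Longrightarrow> hs x lo (Suc p) (Suc m) = hs x lo p (Suc m) + x (Suc p) * hs x lo (Suc p) m"
  by simp

lemma EU: "lo \<le> Suc p \<Longrightarrow> es x lo (Suc p) (Suc m) = es x lo p (Suc m) + x (Suc p) * es x lo p m"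
  by simp

lemma HL: "lo \<le> p \<Longrightarrow> hs x lo p (Suc m) = hs x (Suc lo) p (Suc m) + x lo * hs x lo p m"
proof (induction m arbitrary: p)
  case 0
  then show ?case by (simp add: sum.atLeast_Suc_atMost)
next
  case (Suc m)
  have "hs x lo p (Suc (Suc m)) = (\<Sum>q=lo..p. x q * hs x lo q (Suc m))" by (rule hs.simps(2))
  also have "\<dots> = x lo * hs x lo lo (Suc m) + (\<Sum>q=Suc lo..p. x q * hs x lo q (Suc m))"
    by (rule sum.atLeast_Suc_atMost[OF Suc.prems])
  finally have h1: "hs x lo p (Suc (Suc m)) = x lo * hs x lo lo (Suc m) + (\<Sum>q=Suc lo..p. x q * hs x lo q (Suc m))" .
  also have "(\<Sum>q=Suc lo..p. x q * hs x lo q (Suc m)) =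
      (\<Sum>q=Suc lo..p. x q * hs x (Suc lo) q (Suc m) + x lo * (x q * hs x lo q m))"
    by (rule sum.cong) (auto simp: Suc.IH algebra_simps simp del: hs.simps(2))
  also have "x lo * hs x lo p (Suc m) = x lo * (x lo * hs x lo lo m) + x lo * (\<Sum>q=Suc lo..p. x q * hs x lo q m)"
    using Suc.prems by (simp add: sum.atLeast_Suc_atMost algebra_simps)
  ultimately show ?case using h1
    by (simp add: sum.distrib sum_distrib_left algebra_simps del: hs.simps(2)) (simp add: algebra_simps)
qed

lemma EL: "1 \<le> lo \<Longrightarrow> lo \<le> p \<Longrightarrow> es x lo p (Suc m) = es x (Suc lo) p (Suc m) + x lo * es x (Suc lo) p m"
proof (induction m arbitrary: p)
  case 0
  then show ?case by (simp add: sum.atLeast_Suc_atMost)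
next
  case (Suc m)
  have e0: "es x lo (lo - 1) (Suc m) = 0" using Suc.prems by simp
  have "es x lo p (Suc (Suc m)) = (\<Sum>q=lo..p. x q * es x lo (q - 1) (Suc m))" by (rule es.simps(2))
  also have "\<dots> = x lo * es x lo (lo - 1) (Suc m) + (\<Sum>q=Suc lo..p. x q * es x lo (q - 1) (Suc m))"
    by (rule sum.atLeast_Suc_atMost) (use Suc.prems in simp)
  also have "\<dots> = (\<Sum>q=Suc lo..p. x q * es x lo (q - 1) (Suc m))" using e0 by simp
  also have "\<dots> = (\<Sum>q=Suc lo..p. x q * es x (Suc lo) (q - 1) (Suc m) + x lo * (x q * es x (Suc lo) (q - 1) m))"
    by (rule sum.cong) (use Suc.prems in \<open>auto simp: Suc.IH algebra_simps simp del: es.simps(2)\<close>)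
  finally show ?case
    by (simp add: sum.distrib sum_distrib_left algebra_simps del: es.simps(2)) (simp add: sum_distrib_left algebra_simps)
qed

lemma generic:
  fixes E E' H :: "nat \<Rightarrow> real"
  assumes "E' 0 = E 0" and "\<And>k. E' (Suc k) = E (Suc k) + x * E k"
  shows "(\<Sum>k\<le>Suc m. (-1)^k * E' k * H (Suc m - k)) =
     (\<Sum>k\<le>Suc m. (-1)^k * E k * H (Suc m - k)) - x * (\<Sum>k\<le>m. (-1)^k * E k * H (m - k))"
  by (simp only: sum.atMost_Suc_shift assms) (simp add: sum.distrib sum_subtractf sum_negf sum_distrib_left algebra_simps)

lemma es_zero_deg: "p < lo \<Longrightarrow> es x lo p k = (if k = 0 then 1 else 0)"
  by (cases k) auto

lemma sum_delta: "(\<Sum>k\<le>m. (-1)^k * (if k = 0 then 1 else 0) * (H (m - k) :: real)) = H m"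
  by (simp only: sum.atMost_shift) (simp add: sum.atMost_Suc_shift)

lemma identA: "d \<le> p \<Longrightarrow> (\<Sum>k\<le>m. (-1)^k * es x 1 d k * hs x 1 p (m - k)) = hs x (Suc d) p m"
proof (induction d arbitrary: m)
  case 0
  have "(\<Sum>k\<le>m. (-1)^k * es x 1 0 k * hs x 1 p (m - k)) = (\<Sum>k\<le>m. (-1)^k * (if k = 0 then 1 else 0) * hs x 1 p (m - k))"
    by (rule sum.cong) (auto simp: es_zero_deg)
  then show ?case using sum_delta by simp
next
  case (Suc d)
  show ?case
  proof (cases m)
    case 0 then show ?thesis by simp
  next
    case (Suc m')
    have "(\<Sum>k\<le>Suc m'. (-1)^k * es x 1 (Suc d) k * hs x 1 p (Suc m' - k)) =
      (\<Sum>k\<le>Suc m'. (-1)^k * es x 1 d k * hs x 1 p (Suc m' - k)) - x (Suc d) * (\<Sum>k\<le>m'. (-1)^k * es x 1 d k * hs x 1 p (m' - k))"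
      by (rule generic) (simp_all del: es.simps(2) add: EU)
    also have "\<dots> = hs x (Suc d) p (Suc m') - x (Suc d) * hs x (Suc d) p m'"
      using Suc.IH Suc.prems by simp
    also have "\<dots> = hs x (Suc (Suc d)) p (Suc m')"
      using HL[of "Suc d" p x m'] Suc.prems by simp
    finally show ?thesis using Suc by simp
  qed
qed

lemma identB: "r \<le> p \<Longrightarrow> (\<Sum>l\<le>n. (-1)^l * es x (Suc r) p l * hs x 1 p (n - l)) = hs x 1 r n"
proof (induction r arbitrary: n rule: inc_induct)
  case base
  have "(\<Sum>l\<le>n. (-1)^l * es x (Suc p) p l * hs x 1 p (n - l)) = (\<Sum>l\<le>n. (-1)^l * (if l = 0 then 1 else 0) * hs x 1 p (n - l))"
    by (rule sum.cong) (auto simp: es_zero_deg)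
  then show ?case using sum_delta by simp
next
  case (step r)
  show ?case
  proof (cases n)
    case 0 then show ?thesis by simp
  next
    case (Suc n')
    have "(\<Sum>l\<le>Suc n'. (-1)^l * es x (Suc r) p l * hs x 1 p (Suc n' - l)) =
      (\<Sum>l\<le>Suc n'. (-1)^l * es x (Suc (Suc r)) p l * hs x 1 p (Suc n' - l)) - x (Suc r) * (\<Sum>l\<le>n'. (-1)^l * es x (Suc (Suc r)) p l * hs x 1 p (n' - l))"
      by (rule generic) (use step in \<open>simp_all del: es.simps(2) add: EL\<close>)
    also have "\<dots> = hs x 1 (Suc r) (Suc n') - x (Suc r) * hs x 1 (Suc r) n'"
      using step.IH by simp
    also have "\<dots> = hs x 1 r (Suc n')"
      using HU[of 1 r x n'] by simp
    finally show ?thesis using Suc by simp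
  qed
qed

theorem proposition2p2:
  fixes a b c p m n :: nat
  assumes "a > 0" and "b > 0" and "c > 0"
  shows "mzeta_star p (replicate m c @ [b] @ replicate n a) =
    (\<Sum>k=0..m. \<Sum>l=0..n. (-1) ^ (k + l) *
        mzeta p (replicate l a @ [b] @ replicate k c) *
        mzeta_star p (replicate (m - k) c) *
        mzeta_star p (replicate (n - l) a))"
proof -
  define wa where "wa = (\<lambda>q. 1 / real q ^ a)"
  define wc where "wc = (\<lambda>q. 1 / real q ^ c)"
  define T where "T = (\<lambda>r k l. ((-1)^k * es wc 1 (r - 1) k * hs wc 1 p (m - k)) *
      ((-1)^l * es wa (Suc r) p l * hs wa 1 p (n - l)) / real r ^ b)"
  have "(\<Sum>k=0..m. \<Sum>l=0..n. (-1) ^ (k + l) *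
        mzeta p (replicate l a @ [b] @ replicate k c) *
        mzeta_star p (replicate (m - k) c) *
        mzeta_star p (replicate (n - l) a)) = (\<Sum>k\<le>m. \<Sum>l\<le>n. \<Sum>r=1..p. T r k l)"
    unfolding atLeast0AtMost
    apply (rule sum.cong, simp, rule sum.cong, simp)
    apply (simp add: C4 C2 C1 flip: wa_def wc_def)
    apply (simp add: sum_distrib_left sum_distrib_right T_def power_add)
    apply (rule sum.cong, simp)
    apply (simp add: field_simps)
    done
  also have "\<dots> = (\<Sum>r=1..p. \<Sum>k\<le>m. \<Sum>l\<le>n. T r k l)"
  proof -
    have "(\<Sum>k\<le>m. \<Sum>l\<le>n. \<Sum>r=1..p. T r k l) = (\<Sum>k\<le>m. \<Sum>r=1..p. \<Sum>l\<le>n. T r k l)"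
      by (rule sum.cong, simp, rule sum.swap)
    also have "\<dots> = (\<Sum>r=1..p. \<Sum>k\<le>m. \<Sum>l\<le>n. T r k l)" by (rule sum.swap)
    finally show ?thesis .
  qed
  also have "\<dots> = (\<Sum>r=1..p. (\<Sum>k\<le>m. (-1)^k * es wc 1 (r - 1) k * hs wc 1 p (m - k)) *
       (\<Sum>l\<le>n. (-1)^l * es wa (Suc r) p l * hs wa 1 p (n - l)) / real r ^ b)"
    by (simp add: T_def sum_product sum_divide_distrib)
  also have "\<dots> = (\<Sum>r=1..p. hs wc r p m * (hs wa 1 r n / real r ^ b))"
  proof (rule sum.cong)
    fix r assume r: "r \<in> {1..p}"
    then have "Suc (r - 1) = r" by auto
    then show "(\<Sum>k\<le>m. (-1)^k * es wc 1 (r - 1) k * hs wc 1 p (m - k)) *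
       (\<Sum>l\<le>n. (-1)^l * es wa (Suc r) p l * hs wa 1 p (n - l)) / real r ^ b =
       hs wc r p m * (hs wa 1 r n / real r ^ b)"
      using identA[of "r - 1" p wc m] identB[of r p wa n] r by simp
  qed simp
  also have "\<dots> = mzeta_star p (replicate m c @ [b] @ replicate n a)"
    by (simp add: C3 C1 wa_def wc_def)
  finally show ?thesis ..
qed

end
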